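(* Let $n=p^3q$ with primes $3\le p<q$, and let $\mathcal{D}_{S_1},\mathcal{D}_{S_2}\subseteq\mathcal{D}_{[n]}\setminus\{n\}$ with $1\in\mathcal{D}_{S_1}\cap\mathcal{D}_{S_2}$. If $\mathrm{Spec}(\mathrm{ICG}(n,\mathcal{D}_{S_1}))=\mathrm{Spec}(\mathrm{ICG}(n,\mathcal{D}_{S_2}))$, then $\mathcal{D}_{S_1}=\mathcal{D}_{S_2}$.
   Context: Identify $\mathbb{Z}_n$ with $[n]=\{1,\dots,n\}$. For a divisor $d$ of $n$, $G_n(d)=\{j\in[n]:\gcd(j,n)=d\}$; $\mathcal{D}_{[n]}$ is the set of positive divisors of $n$. For $\mathcal{D}\subseteq\mathcal{D}_{[n]}\setminus\{n\}$, $\mathrm{ICG}(n,\mathcal{D})=\mathrm{Cay}(\mathbb{Z}_n,S)$ with $S=\bigcup_{d\in\mathcal{D}}G_n(d)$, and $\mathcal{D}=\mathcal{D}_S$. $\mathrm{Spec}$ is the multiset of adjacency eigenvalues. *)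

theory Defs
  imports "Jordan_Normal_Form.Char_Poly" "HOL-Library.Multiset"
begin

definition G :: "nat \<Rightarrow> nat \<Rightarrow> nat set" where
  "G n d = {j \<in> {1..n}. gcd j n = d}"

definition divisors_of :: "nat \<Rightarrow> nat set" where
  "divisors_of n = {d. 0 < d \<and> d dvd n}"

definition conn_set :: "nat \<Rightarrow> nat set \<Rightarrow> nat set" where
  "conn_set n D = (\<Union>d\<in>D. G n d)"

(* Cayley graph Cay(Z_n, S): vertex i (0 <= i < n) stands for the residue i mod n
   (so vertex 0 is the element n of [n]); i ~ j iff j - i is congruent mod n to some s in S. *)
definition cay_adj :: "nat \<Rightarrow> nat set \<Rightarrow> complex mat" where
  "cay_adj n S = mat n n (\<lambda>(i, j).
      if (\<exists>s\<in>S. int s mod int n = (int j - int i) mod int n) then 1 else 0)"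

definition ICG_adj :: "nat \<Rightarrow> nat set \<Rightarrow> complex mat" where
  "ICG_adj n D = cay_adj n (conn_set n D)"

definition Spec :: "complex mat \<Rightarrow> complex multiset" where
  "Spec A = (THE M. char_poly A = (\<Prod>a\<in>#M. [:- a, 1:]))"

end

theory Submission
  imports Defs
begin


definition omega :: "nat \<Rightarrow> complex" where "omega n = cis (2 * pi / real n)"

lemma omega_pow: "omega n ^ m = cis (2 * pi * real m / real n)"
  by (simp add: omega_def DeMoivre field_simps)

lemma omega_nz[simp]: "omega n \<noteq> 0"
  by (simp add: omega_def)

lemma norm_omega_pow[simp]: "norm (omega n ^ m) = 1"
  by (simp add: omega_pow)

lemma omega_pow_eq_1: assumes "n > 0" shows "omega n ^ m = 1 \<longleftrightarrow> n dvd m"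
proof
  assume "n dvd m" then obtain t where t: "m = n*t" by auto
  have c: "cis (2*(pi*real t)) = 1" using cis_multiple_2pi[of "real t"] by (simp add: mult.assoc)
  show "omega n ^ m = 1" using assms by (simp add: omega_pow t c)
next
  assume h: "omega n ^ m = 1"
  then have "Re (cis (2 * pi * real m / real n)) = 1" by (simp add: omega_pow)
  then have "cos (2 * pi * real m / real n) = 1" by simp
  then obtain i :: int where i: "2 * pi * real m / real n = of_int i * 2 * pi"
    using cos_one_2pi_int by blast
  then have "real m = of_int i * real n" using assms by (simp add: field_simps)
  then have "int m = i * int n"
    by (metis of_int_eq_iff of_int_mult of_int_of_nat_eq)
  then show "n dvd m"
    by (metis dvd_triv_right int_dvd_int_iff)
qed

lemma omega_pow_mod: assumes "n > 0" shows "omega n ^ m = omega n ^ (m mod n)"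
proof -
  have "omega n ^ m = omega n ^ (n * (m div n) + m mod n)" by simp
  also have "\<dots> = (omega n ^ n) ^ (m div n) * omega n ^ (m mod n)"
    by (simp only: power_add power_mult)
  also have "omega n ^ n = 1" using omega_pow_eq_1[OF assms] by simp
  finally show ?thesis by simp
qed

lemma omega_pow_cong: assumes "n > 0" "m mod n = m' mod n" shows "omega n ^ m = omega n ^ m'"
  using omega_pow_mod[OF assms(1), of m] omega_pow_mod[OF assms(1), of m'] assms(2) by simp

lemma omega_inj: assumes "n > 0" "i < n" "j < n" "omega n ^ i = omega n ^ j" shows "i = j"
proof -
  { fix i j assume ij: "i \<le> j" "j < n" "omega n ^ i = omega n ^ j"
    have "omega n ^ j = omega n ^ (i + (j - i))" using ij by simp
    then have "omega n ^ j = omega n ^ i * omega n ^ (j - i)" by (simp only: power_add)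
    then have "omega n ^ (j - i) = 1" using ij by simp
    then have "n dvd (j - i)" using omega_pow_eq_1[OF assms(1)] by simp
    then have "j - i = 0" using ij by (metis dvd_imp_le le_less_trans diff_le_self linorder_not_le neq0_conv)
    then have "i = j" using ij by simp }
  then show ?thesis using assms by (metis linorder_le_cases)
qed

lemma geom_root: fixes z :: complex assumes "z ^ N = 1"
  shows "(\<Sum>i<N. z ^ i) = (if z = 1 then of_nat N else 0)"
  using assms by (simp add: sum_gp_strict)

lemma pw_aux: "(x::complex)^(i*l) * y^(l*j) = (x^i*y^j)^l"
  by (simp add: power_mult_distrib flip: power_mult, simp add: mult.commute)

lemma mult_mat_index: assumes "A \<in> carrier_mat n n" "B \<in> carrier_mat n n" "i < n" "j < n"
  shows "(A * B) $$ (i,j) = (\<Sum>l<n. A $$ (i,l) * B $$ (l,j))"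
  using assms by (simp add: index_mult_mat scalar_prod_def row_def col_def lessThan_atLeast0)

definition fv :: "nat \<Rightarrow> nat set \<Rightarrow> nat \<Rightarrow> complex" where
  "fv n S r = (if (\<exists>s\<in>S. int s mod int n = int r) then 1 else 0)"

definition mu :: "nat \<Rightarrow> nat set \<Rightarrow> nat \<Rightarrow> complex" where
  "mu n S k = (\<Sum>r<n. fv n S r * omega n ^ (r * k))"

definition Fm :: "nat \<Rightarrow> complex mat" where
  "Fm n = mat n n (\<lambda>(i,j). omega n ^ (i * j))"

definition Gm :: "nat \<Rightarrow> complex mat" where
  "Gm n = mat n n (\<lambda>(i,j). inverse (omega n) ^ (i * j) / of_nat n)"

definition Dm :: "nat \<Rightarrow> nat set \<Rightarrow> complex mat" where
  "Dm n S = mat n n (\<lambda>(i,j). if i = j then mu n S i else 0)"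

lemma FG: assumes "n > 0" shows "Fm n * Gm n = 1\<^sub>m n"
proof (rule eq_matI)
  fix i j assume ij: "i < dim_row (1\<^sub>m n)" "j < dim_col (1\<^sub>m n)"
  then have ij': "i < n" "j < n" by auto
  let ?z = "omega n ^ i * inverse (omega n) ^ j"
  have "(Fm n * Gm n) $$ (i,j) = (\<Sum>l<n. omega n ^ (i*l) * (inverse (omega n) ^ (l*j) / of_nat n))"
    using ij' by (subst mult_mat_index[of _ n]) (auto simp: Fm_def Gm_def)
  also have "\<dots> = (\<Sum>l<n. ?z ^ l) / of_nat n"
    by (simp add: sum_divide_distrib pw_aux)
  also have "?z ^ n = 1"
  proof -
    have w: "omega n ^ n = 1" using omega_pow_eq_1[OF assms] by simp
    then have w': "inverse (omega n) ^ n = 1" by (simp add: power_inverse)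
    show ?thesis using w w'
    by (simp add: power_mult_distrib flip: power_mult[of _ i] power_mult[of _ j] power_inverse,
        simp add: power_mult mult.commute[of i] mult.commute[of j])
  qed
  then have "(\<Sum>l<n. ?z ^ l) = (if ?z = 1 then of_nat n else 0)" by (rule geom_root)
  also have "(?z = 1) = (i = j)"
  proof
    assume "?z = 1"
    then have "omega n ^ i = omega n ^ j" by (simp add: field_simps power_inverse)
    then show "i = j" using omega_inj[OF assms ij'] by simp
  qed (simp add: power_inverse)
  finally show "(Fm n * Gm n) $$ (i,j) = 1\<^sub>m n $$ (i,j)" using ij' assms by simp
qed (auto simp: Fm_def Gm_def)

lemma GF: assumes "n > 0" shows "Gm n * Fm n = 1\<^sub>m n"
proof (rule eq_matI)
  fix i j assume ij: "i < dim_row (1\<^sub>m n)" "j < dim_col (1\<^sub>m n)"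
  then have ij': "i < n" "j < n" by auto
  let ?z = "inverse (omega n) ^ i * omega n ^ j"
  have "(Gm n * Fm n) $$ (i,j) = (\<Sum>l<n. (inverse (omega n) ^ (i*l) / of_nat n) * omega n ^ (l*j))"
    using ij' by (subst mult_mat_index[of _ n]) (auto simp: Fm_def Gm_def)
  also have "\<dots> = (\<Sum>l<n. ?z ^ l) / of_nat n"
    by (simp add: sum_divide_distrib pw_aux)
  also have "?z ^ n = 1"
  proof -
    have w: "omega n ^ n = 1" using omega_pow_eq_1[OF assms] by simp
    then have w': "inverse (omega n) ^ n = 1" by (simp add: power_inverse)
    show ?thesis using w w'
    by (simp add: power_mult_distrib flip: power_mult[of _ i] power_mult[of _ j] power_inverse,
        simp add: power_mult mult.commute[of i] mult.commute[of j])
  qed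
  then have "(\<Sum>l<n. ?z ^ l) = (if ?z = 1 then of_nat n else 0)" by (rule geom_root)
  also have "(?z = 1) = (i = j)"
  proof
    assume "?z = 1"
    then have "omega n ^ j = omega n ^ i" by (simp add: field_simps power_inverse)
    then show "i = j" using omega_inj[OF assms ij'(2,1)] by simp
  qed (simp add: power_inverse)
  finally show "(Gm n * Fm n) $$ (i,j) = 1\<^sub>m n $$ (i,j)" using ij' assms by simp
qed (auto simp: Fm_def Gm_def)

lemma cay_entry: assumes "i < n" "j < n"
  shows "cay_adj n S $$ (i,j) = fv n S ((j + n - i) mod n)"
proof -
  have "int ((j + n - i) mod n) = (int j - int i + int n) mod int n"
    using assms by (simp add: zmod_int of_nat_diff algebra_simps)
  also have "\<dots> = (int j - int i) mod int n" by simp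
  finally show ?thesis using assms by (simp add: cay_adj_def fv_def)
qed

lemma cay_carrier[simp]: "cay_adj n S \<in> carrier_mat n n" by (simp add: cay_adj_def)
lemma cay_dims[simp]: "dim_row (cay_adj n S) = n" "dim_col (cay_adj n S) = n" by (simp_all add: cay_adj_def)

lemma AF: assumes n: "n > 0" and ik: "i < n" "k < n"
  shows "(cay_adj n S * Fm n) $$ (i,k) = omega n ^ (i*k) * mu n S k"
proof -
  have "(cay_adj n S * Fm n) $$ (i,k) = (\<Sum>j<n. fv n S ((j + n - i) mod n) * omega n ^ (j*k))"
    using ik by (subst mult_mat_index[of _ n]) (auto simp: Fm_def cay_entry intro!: sum.cong)
  also have "\<dots> = (\<Sum>r<n. fv n S r * omega n ^ (((r + i) mod n) * k))"
  proof (rule sum.reindex_bij_witness[of _ "\<lambda>r. (r + i) mod n" "\<lambda>j. (j + n - i) mod n"])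
    fix j assume j: "j \<in> {..<n}"
    have "((j + n - i) mod n + i) mod n = (j + n - i + i) mod n" by (simp add: mod_add_left_eq)
    also have "\<dots> = j" using j ik by simp
    finally show "((j + n - i) mod n + i) mod n = j" .
    then show "fv n S ((j + n - i) mod n) * omega n ^ (((j + n - i) mod n + i) mod n * k) =
          fv n S ((j + n - i) mod n) * omega n ^ (j * k)" by simp
    show "(j + n - i) mod n \<in> {..<n}" using n by simp
  next
    fix r assume r: "r \<in> {..<n}"
    have "((r + i) mod n + n - i) mod n = ((r + i) mod n + (n - i)) mod n" using ik by simp
    also have "\<dots> = (r + i + (n - i)) mod n" by (simp add: mod_add_left_eq)
    also have "r + i + (n - i) = r + n" using ik by simp
    finally show "((r + i) mod n + n - i) mod n = r" using r by simp
    show "(r + i) mod n \<in> {..<n}" using n by simp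
  qed
  also have "\<dots> = (\<Sum>r<n. omega n ^ (i*k) * (fv n S r * omega n ^ (r * k)))"
  proof (rule sum.cong[OF refl])
    fix r
    have "omega n ^ (((r + i) mod n) * k) = omega n ^ ((r + i) * k)"
      by (rule omega_pow_cong[OF n]) (simp add: mod_mult_left_eq)
    also have "\<dots> = omega n ^ (i*k) * omega n ^ (r * k)" by (simp add: algebra_simps power_add)
    finally show "fv n S r * omega n ^ (((r + i) mod n) * k) = omega n ^ (i*k) * (fv n S r * omega n ^ (r * k))"
      by simp
  qed
  also have "\<dots> = omega n ^ (i*k) * mu n S k" by (simp add: mu_def sum_distrib_left)
  finally show ?thesis .
qed

lemma FD: assumes "i < n" "k < n"
  shows "(Fm n * Dm n S) $$ (i,k) = omega n ^ (i*k) * mu n S k"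
proof -
  have "(Fm n * Dm n S) $$ (i,k) = (\<Sum>l<n. omega n ^ (i*l) * (if l = k then mu n S l else 0))"
    using assms by (subst mult_mat_index[of _ n]) (auto simp: Fm_def Dm_def)
  also have "\<dots> = omega n ^ (i*k) * mu n S k"
    using assms by (simp add: if_distrib[of "\<lambda>x. _ * x"] sum.delta cong: if_cong)
  finally show ?thesis .
qed

lemma cay_sim: assumes n: "n > 0" shows "cay_adj n S = Fm n * Dm n S * Gm n"
proof -
  have A: "cay_adj n S \<in> carrier_mat n n" by (simp add: cay_adj_def)
  have F: "Fm n \<in> carrier_mat n n" by (simp add: Fm_def)
  have G: "Gm n \<in> carrier_mat n n" by (simp add: Gm_def)
  have D: "Dm n S \<in> carrier_mat n n" by (simp add: Dm_def)
  have AFD: "cay_adj n S * Fm n = Fm n * Dm n S"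
  proof (rule eq_matI)
    fix i j assume "i < dim_row (Fm n * Dm n S)" "j < dim_col (Fm n * Dm n S)"
    then have ij: "i < n" "j < n" using F D by auto
    show "(cay_adj n S * Fm n) $$ (i, j) = (Fm n * Dm n S) $$ (i, j)"
      by (simp only: AF[OF n ij] FD[OF ij])
  qed (use A F D in auto)
  have "cay_adj n S = cay_adj n S * (Fm n * Gm n)" using A by (simp add: FG[OF n])
  also have "\<dots> = (cay_adj n S * Fm n) * Gm n" using A F G by (simp add: assoc_mult_mat[of _ n n _ n _ n])
  also have "\<dots> = Fm n * Dm n S * Gm n" by (simp add: AFD)
  finally show ?thesis .
qed

lemma char_poly_cay: assumes n: "n > 0"
  shows "char_poly (cay_adj n S) = (\<Prod>a\<leftarrow>map (mu n S) [0..<n]. [:- a, 1:])"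
proof -
  have F: "Fm n \<in> carrier_mat n n" by (simp add: Fm_def)
  have G: "Gm n \<in> carrier_mat n n" by (simp add: Gm_def)
  have D: "Dm n S \<in> carrier_mat n n" by (simp add: Dm_def)
  have "{cay_adj n S, Dm n S, Fm n, Gm n} \<subseteq> carrier_mat n n" using F G D by simp
  then have "similar_mat (cay_adj n S) (Dm n S)"
    by (rule similar_matI[OF _ FG[OF n] GF[OF n] cay_sim[OF n]])
  then have "char_poly (cay_adj n S) = char_poly (Dm n S)" by (rule char_poly_similar)
  also have "\<dots> = (\<Prod>a\<leftarrow>diag_mat (Dm n S). [:- a, 1:])"
    by (rule char_poly_upper_triangular[OF D]) (auto simp: upper_triangular_def Dm_def)
  also have "diag_mat (Dm n S) = map (mu n S) [0..<n]"
    by (rule nth_equalityI) (auto simp: diag_mat_def Dm_def)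
  finally show ?thesis .
qed

lemma order_lin: "order x ([:- a, 1:] :: complex poly) = (if x = a then 1 else 0)"
proof (cases "x = a")
  case True then show ?thesis using order_power_n_n[of a 1] by simp
next
  case False then show ?thesis by (simp, intro order_0I, simp)
qed

lemma order_prod_lin: "order x (\<Prod>a\<in>#M. [:- a, 1:] :: complex poly) = count M x"
proof (induction M)
  case empty then show ?case by simp
next
  case (add a M)
  have nz: "(\<Prod>a\<in>#M. [:- a, 1:] :: complex poly) \<noteq> 0"
    by (auto simp: prod_mset_zero_iff)
  have "order x (\<Prod>b\<in>#add_mset a M. [:- b, 1:] :: complex poly) = order x ([:- a, 1:] * (\<Prod>b\<in>#M. [:- b, 1:]))"
    by simp
  also have "\<dots> = order x [:- a, 1:] + order x (\<Prod>b\<in>#M. [:- b, 1:] :: complex poly)"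
    by (rule order_mult) (metis mult_eq_0_iff nz pCons_eq_0_iff zero_neq_one)
  finally show ?case using add by (simp add: order_lin)
qed

lemma Spec_eq: assumes "char_poly A = (\<Prod>a\<leftarrow>xs. [:- a, 1:])"
  shows "Spec A = mset xs"
  unfolding Spec_def
proof (rule the_equality)
  show "char_poly A = (\<Prod>a\<in>#mset xs. [:- a, 1:])"
    using assms by (simp add: prod_mset_prod_list flip: mset_map)
  fix M assume "char_poly A = (\<Prod>a\<in>#M. [:- a, 1:])"
  then have "(\<Prod>a\<in>#M. [:- a, 1:]) = (\<Prod>a\<in>#mset xs. [:- a, 1:])"
    using assms by (simp add: prod_mset_prod_list flip: mset_map)
  then show "M = mset xs"
    by (metis multiset_eqI order_prod_lin)
qed

lemma Spec_cay: assumes "n > 0" shows "Spec (cay_adj n S) = mset (map (mu n S) [0..<n])"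
  by (rule Spec_eq, rule char_poly_cay[OF assms])

lemma Re_mu_le: "Re (mu n S k) \<le> Re (mu n S 0)"
proof -
  have "Re (mu n S k) = (\<Sum>r<n. Re (fv n S r * omega n ^ (r * k)))" by (simp add: mu_def)
  also have "\<dots> \<le> (\<Sum>r<n. Re (fv n S r))"
  proof (rule sum_mono)
    fix r
    have "Re (omega n ^ (r*k)) \<le> 1"
      using complex_Re_le_cmod[of "omega n ^ (r*k)"] by simp
    then show "Re (fv n S r * omega n ^ (r * k)) \<le> Re (fv n S r)" by (simp add: fv_def)
  qed
  also have "\<dots> = Re (mu n S 0)" by (simp add: mu_def)
  finally show ?thesis .
qed




locale pqn =
  fixes p q n :: nat
  assumes pp: "prime p" and qp: "prime q" and p3: "3 \<le> p" and plq: "p < q" and nd: "n = p^3*q"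
begin

lemma p1: "p > 1" using p3 by simp
lemma q1: "q > 1" using p3 plq by simp
lemma pneq: "p \<noteq> q" using plq by simp
lemma npos: "n > 0" using nd p1 q1 by simp

lemma cop: "coprime (p^a) (q^b)"
  using primes_coprime[OF pp qp pneq] by (simp add: coprime_power_left_iff coprime_power_right_iff)

lemma dvd_pq: "p^a*q^b dvd p^c*q^d \<longleftrightarrow> a \<le> c \<and> b \<le> d"
proof
  assume h: "p^a*q^b dvd p^c*q^d"
  then have "p^a dvd p^c*q^d" using dvd_mult_left by blast
  then have "p^a dvd p^c" using cop[of a d] by (simp add: coprime_dvd_mult_left_iff)
  then have "a \<le> c" using dvd_power_iff_le[of p a c] p1 by simp
  moreover have "q^b dvd p^c*q^d" using h dvd_mult_right by blast
  then have "q^b dvd q^d" using cop[of c b] by (simp add: coprime_dvd_mult_right_iff coprime_commute)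
  then have "b \<le> d" using dvd_power_iff_le[of q b d] q1 by simp
  ultimately show "a \<le> c \<and> b \<le> d" by simp
next
  assume "a \<le> c \<and> b \<le> d"
  then show "p^a*q^b dvd p^c*q^d" by (simp add: le_imp_power_dvd mult_dvd_mono)
qed

lemma dvd_p: "p^a*q^b dvd p^c \<longleftrightarrow> a \<le> c \<and> b = 0"
  using dvd_pq[of a b c 0] by simp

lemma div_form: assumes "d dvd n" shows "\<exists>a b. a \<le> 3 \<and> b \<le> 1 \<and> d = p^a*q^b"
proof -
  from assms nd obtain x y where xy: "d = x*y" "x dvd p^3" "y dvd q^1"
    using division_decomp by (metis power_one_right)
  then obtain a where "a \<le> 3" "x = p^a" using divides_primepow_nat[OF pp] by blast
  moreover obtain b where "b \<le> 1" "y = q^b" using xy divides_primepow_nat[OF qp] by blast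
  ultimately show ?thesis using xy by blast
qed

definition cls :: "nat \<Rightarrow> nat" where
  "cls k = (if p^3 dvd k then 3 else if p^2 dvd k then 2 else if p dvd k then 1 else 0)"

definition bt :: "nat \<Rightarrow> nat" where "bt k = (if q dvd k then 1 else 0)"

lemma cls_le: "cls k \<le> 3" by (simp add: cls_def)
lemma bt_le: "bt k \<le> 1" by (simp add: bt_def)

lemma pow_dvd_mono: "i \<le> j \<Longrightarrow> p^j dvd k \<Longrightarrow> p^i dvd k"
  using le_imp_power_dvd dvd_trans by blast

lemma pow_dvd_cls: assumes "i \<le> 3" shows "p^i dvd k \<longleftrightarrow> i \<le> cls k"
proof -
  have "i = 0 \<or> i = 1 \<or> i = 2 \<or> i = 3" using assms by auto
  then show ?thesis
    using pow_dvd_mono[of 1 2 k] pow_dvd_mono[of 1 3 k] pow_dvd_mono[of 2 3 k]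
    by (auto simp: cls_def)
qed

lemma cls_pow: "c \<le> 3 \<Longrightarrow> cls (p^c) = c"
proof -
  assume c: "c \<le> 3"
  have "\<And>i. i \<le> 3 \<Longrightarrow> p^i dvd p^c \<longleftrightarrow> i \<le> c" using dvd_power_iff_le[of p] p1 by simp
  then have "\<And>i. i \<le> 3 \<Longrightarrow> i \<le> cls (p^c) \<longleftrightarrow> i \<le> c" using pow_dvd_cls by blast
  then show ?thesis using c cls_le[of "p^c"] by (metis le_antisym order_refl)
qed

lemma dvd_iff: assumes "a \<le> 3" "b \<le> 1"
  shows "p^a*q^b dvd k \<longleftrightarrow> a \<le> cls k \<and> b \<le> bt k"
proof -
  have "p^a*q^b dvd k \<longleftrightarrow> p^a dvd k \<and> q^b dvd k"
    using divides_mult[OF _ _ cop[of a b]] by (auto intro: dvd_mult_left dvd_mult_right)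
  moreover have "q^b dvd k \<longleftrightarrow> b \<le> bt k"
    using assms by (cases b) (auto simp: bt_def)
  ultimately show ?thesis using pow_dvd_cls[OF assms(1)] by simp
qed

lemma gcd_form: "gcd j n = p^(cls j) * q^(bt j)"
proof -
  have "gcd j n dvd n" by simp
  then obtain a b where ab: "a \<le> 3" "b \<le> 1" "gcd j n = p^a*q^b" using div_form by blast
  have "p^a*q^b dvd j" using ab(3) by (metis gcd_dvd1)
  then have le1: "a \<le> cls j" "b \<le> bt j" using dvd_iff[OF ab(1,2)] by auto
  have "p^(cls j) * q^(bt j) dvd j" using dvd_iff[OF cls_le bt_le] by simp
  moreover have "p^(cls j) * q^(bt j) dvd n" unfolding nd
    using dvd_pq[of "cls j" "bt j" 3 1] cls_le bt_le by simp
  ultimately have "p^(cls j) * q^(bt j) dvd p^a*q^b" using ab(3) by (metis gcd_greatest)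
  then have "cls j \<le> a" "bt j \<le> b" using dvd_pq by auto
  with le1 ab(3) show ?thesis by simp
qed

definition Tv :: "nat \<Rightarrow> nat \<Rightarrow> nat \<Rightarrow> int" where
  "Tv i t k = (if p^(3-i)*q^(1-t) dvd k then int (p^(3-i)*q^(1-t)) else 0)"

end

lemma Tsum: assumes "m * N = n" "m > 0" "N > 0"
  shows "(\<Sum>j\<in>{1..n}. if m dvd j then omega n ^ (j*k) else 0) = (if N dvd k then of_nat N else 0)"
proof -
  have n: "n > 0" using assms by (metis nat_0_less_mult_iff)
  have "(\<Sum>j\<in>{1..n}. if m dvd j then omega n ^ (j*k) else 0) = (\<Sum>j\<in>{j\<in>{1..n}. m dvd j}. omega n ^ (j*k))"
    by (rule sum.inter_filter[symmetric]) simp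
  also have "{j\<in>{1..n}. m dvd j} = (\<lambda>i. m * Suc i) ` {..<N}"
  proof (rule Set.set_eqI, rule iffI)
    fix j assume "j \<in> {j\<in>{1..n}. m dvd j}"
    then obtain t where t: "j = m * t" "1 \<le> j" "j \<le> n" by auto
    then have "t \<ge> 1" by (cases t) auto
    moreover have "t \<le> N" using t assms by (metis mult_le_cancel1)
    ultimately show "j \<in> (\<lambda>i. m * Suc i) ` {..<N}" using t
      by (intro image_eqI[of _ _ "t - 1"]) auto
  next
    fix j assume "j \<in> (\<lambda>i. m * Suc i) ` {..<N}"
    then obtain i where i: "i < N" "j = m * Suc i" by auto
    have "m * Suc i \<le> m * N" using i(1) by (metis Suc_leI mult_le_mono2)
    then show "j \<in> {j\<in>{1..n}. m dvd j}" using i assms by auto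
  qed
  also have "(\<Sum>j\<in>(\<lambda>i. m * Suc i) ` {..<N}. omega n ^ (j*k)) = (\<Sum>i<N. omega n ^ (m * Suc i * k))"
    by (rule sum.reindex_cong[of "\<lambda>i. m * Suc i"]) (use assms in \<open>auto simp: inj_on_def\<close>)
  also have "\<dots> = (\<Sum>i<N. omega n ^ (m*k) * (omega n ^ (m*k)) ^ i)"
    by (intro sum.cong refl) (simp add: power_mult[symmetric] power_add[symmetric] algebra_simps)
  also have "\<dots> = omega n ^ (m*k) * (\<Sum>i<N. (omega n ^ (m*k)) ^ i)"
    by (simp add: sum_distrib_left)
  finally have calc: "(\<Sum>j\<in>{1..n}. if m dvd j then omega n ^ (j*k) else 0) = omega n ^ (m*k) * (\<Sum>i<N. (omega n ^ (m*k)) ^ i)" .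
  have e: "m*k*N = n*k" using assms(1) by (simp add: algebra_simps)
  have "(omega n ^ (m*k)) ^ N = omega n ^ (n*k)" by (simp only: power_mult[symmetric] e)
  then have pw: "(omega n ^ (m*k)) ^ N = 1" using omega_pow_eq_1[OF n] by simp
  have gs: "(\<Sum>i<N. (omega n ^ (m*k)) ^ i) = (if omega n ^ (m*k) = 1 then of_nat N else 0)"
    using geom_root[OF pw] .
  have "(omega n ^ (m*k) = 1) = (m*N dvd m*k)" using omega_pow_eq_1[OF n] assms(1) by simp
  also have "\<dots> = (N dvd k)" using assms(2) by simp
  finally have eqv: "(omega n ^ (m*k) = 1) = (N dvd k)" .
  show ?thesis using calc gs eqv by auto
qed




context pqn begin

lemma T_sum: assumes "i \<le> 3" "t \<le> 1"
  shows "(\<Sum>j\<in>{1..n}. if p^i*q^t dvd j then omega n ^ (j*k) else 0) = of_int (Tv i t k)"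
proof -
  have "p^i*q^t * (p^(3-i)*q^(1-t)) = (p^(i + (3-i))) * q^(t + (1-t))"
    by (simp add: power_add algebra_simps)
  also have "\<dots> = n" using assms nd by simp
  finally have e: "p^i*q^t * (p^(3-i)*q^(1-t)) = n" .
  show ?thesis
    by (subst Tsum[OF e]) (use p1 q1 in \<open>auto simp: Tv_def\<close>)
qed

definition Ld :: "nat \<Rightarrow> nat \<Rightarrow> nat \<Rightarrow> int" where
  "Ld a b k = Tv a b k - (if a < 3 then Tv (a+1) b k else 0) - (if b = 0 then Tv a 1 k else 0)
     + (if a < 3 \<and> b = 0 then Tv (a+1) 1 k else 0)"

lemma ind_expand: fixes w :: complex assumes "a \<le> 3" "b \<le> 1"
  shows "(if cls j = a \<and> bt j = b then w else 0) =
     (if p^a*q^b dvd j then w else 0) - (if a < 3 then (if p^(a+1)*q^b dvd j then w else 0) else 0)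
     - (if b = 0 then (if p^a*q^1 dvd j then w else 0) else 0)
     + (if a < 3 \<and> b = 0 then (if p^(a+1)*q^1 dvd j then w else 0) else 0)" (is "?L = ?R")
proof -
  have c: "cls j \<le> 3" "bt j \<le> 1" by (rule cls_le, rule bt_le)
  have d1: "p^a*q^b dvd j \<longleftrightarrow> a \<le> cls j \<and> b \<le> bt j" by (rule dvd_iff[OF assms])
  have d3: "p^a*q^1 dvd j \<longleftrightarrow> a \<le> cls j \<and> 1 \<le> bt j" by (rule dvd_iff[OF assms(1)]) simp
  show ?thesis
  proof (cases "a < 3")
    case True
    then have a1: "a + 1 \<le> 3" by simp
    have d2: "p^(a+1)*q^b dvd j \<longleftrightarrow> a+1 \<le> cls j \<and> b \<le> bt j" by (rule dvd_iff[OF a1 assms(2)])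
    have d4: "p^(a+1)*q^1 dvd j \<longleftrightarrow> a+1 \<le> cls j \<and> 1 \<le> bt j" by (rule dvd_iff[OF a1]) simp
    show ?thesis unfolding d1 d2 d3 d4 using c assms True
      by (cases "bt j"; cases b; auto)
  next
    case False
    show ?thesis unfolding d1 d3 using c assms False
      by (cases "bt j"; cases b; auto)
  qed
qed

lemma sum_if_const: "(\<Sum>j\<in>A. if c then f j else 0) = (if c then sum f A else (0::'a::comm_monoid_add))"
  by simp

lemma cls_sum: assumes "a \<le> 3" "b \<le> 1"
  shows "(\<Sum>j\<in>{1..n}. if cls j = a \<and> bt j = b then omega n ^ (j*k) else 0) = of_int (Ld a b k)"
proof -
  have "(\<Sum>j\<in>{1..n}. if cls j = a \<and> bt j = b then omega n ^ (j*k) else 0) =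
     (\<Sum>j\<in>{1..n}. if p^a*q^b dvd j then omega n ^ (j*k) else 0)
     - (if a < 3 then (\<Sum>j\<in>{1..n}. if p^(a+1)*q^b dvd j then omega n ^ (j*k) else 0) else 0)
     - (if b = 0 then (\<Sum>j\<in>{1..n}. if p^a*q^1 dvd j then omega n ^ (j*k) else 0) else 0)
     + (if a < 3 \<and> b = 0 then (\<Sum>j\<in>{1..n}. if p^(a+1)*q^1 dvd j then omega n ^ (j*k) else 0) else 0)"
    by (simp only: ind_expand[OF assms] sum.distrib sum_subtractf sum_if_const)
  also have "\<dots> = of_int (Ld a b k)"
  proof -
    have t1: "(\<Sum>j\<in>{1..n}. if p^a*q^b dvd j then omega n ^ (j*k) else 0) = of_int (Tv a b k)"
      by (rule T_sum[OF assms])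
    have t3: "(\<Sum>j\<in>{1..n}. if p^a*q^1 dvd j then omega n ^ (j*k) else 0) = of_int (Tv a 1 k)"
      by (rule T_sum[OF assms(1)]) simp
    show ?thesis
    proof (cases "a < 3")
      case True
      then have a1: "a + 1 \<le> 3" by simp
      have t2: "(\<Sum>j\<in>{1..n}. if p^(a+1)*q^b dvd j then omega n ^ (j*k) else 0) = of_int (Tv (a+1) b k)"
        by (rule T_sum[OF a1 assms(2)])
      have t4: "(\<Sum>j\<in>{1..n}. if p^(a+1)*q^1 dvd j then omega n ^ (j*k) else 0) = of_int (Tv (a+1) 1 k)"
        by (rule T_sum[OF a1]) simp
      show ?thesis unfolding t1 t2 t3 t4 using True by (simp add: Ld_def)
    next
      case False
      show ?thesis unfolding t1 t3 using False by (simp add: Ld_def)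
    qed
  qed
  finally show ?thesis .
qed

definition Idx :: "(nat \<times> nat) set" where
  "Idx = {(0,0),(1,0),(2,0),(3,0),(0,1),(1,1),(2,1)}"

definition Lint :: "nat set \<Rightarrow> nat \<Rightarrow> int" where
  "Lint D k = (\<Sum>(a,b)\<in>Idx. if p^a*q^b \<in> D then Ld a b k else 0)"

lemma conn_eq: "conn_set n D = {j\<in>{1..n}. gcd j n \<in> D}"
  by (auto simp: conn_set_def G_def)

lemma gcd_in_D: assumes "n \<notin> D"
  shows "(if gcd j n \<in> D then w else 0) =
    (\<Sum>(a,b)\<in>Idx. if p^a*q^b \<in> D then (if cls j = a \<and> bt j = b then w else 0) else (0::complex))"
proof -
  have nD: "p^3*q^1 \<notin> D" using assms nd by simp
  have g: "gcd j n = p^(cls j)*q^(bt j)" by (rule gcd_form)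
  have c: "cls j = 0 \<or> cls j = 1 \<or> cls j = 2 \<or> cls j = 3" using cls_le[of j] by auto
  have t: "bt j = 0 \<or> bt j = 1" using bt_le[of j] by auto
  show ?thesis using c t nD unfolding g Idx_def
    by (elim disjE; simp only:; simp)
qed

lemma mu_conn: assumes D: "D \<subseteq> divisors_of n - {n}"
  shows "mu n (conn_set n D) k = of_int (Lint D k)"
proof -
  define S where "S = conn_set n D"
  have nD: "n \<notin> D" using D by auto
  have S: "S = {j\<in>{1..n}. gcd j n \<in> D}" by (simp add: S_def conn_eq)
  have Ssub: "S \<subseteq> {1..<n}"
  proof
    fix j assume "j \<in> S"
    then have "j \<in> {1..n}" "gcd j n \<in> D" using S by auto
    moreover have "j \<noteq> n" using nD \<open>gcd j n \<in> D\<close> by auto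
    ultimately show "j \<in> {1..<n}" by auto
  qed
  have fvS: "fv n S r = (if r \<in> S then 1 else 0)" if r: "r < n" for r
  proof -
    have "(\<exists>s\<in>S. int s mod int n = int r) = (r \<in> S)"
    proof
      assume "\<exists>s\<in>S. int s mod int n = int r"
      then obtain s where s: "s \<in> S" "int s mod int n = int r" by auto
      then have "s < n" using Ssub by auto
      then have "int s mod int n = int s" by simp
      then show "r \<in> S" using s by simp
    next
      assume "r \<in> S" then show "\<exists>s\<in>S. int s mod int n = int r" using r by (intro bexI[of _ r]) auto
    qed
    then show ?thesis by (simp add: fv_def)
  qed
  have "mu n S k = (\<Sum>r<n. if r \<in> S then omega n ^ (r*k) else 0)"
    unfolding mu_def by (intro sum.cong refl) (simp add: fvS)
  also have "\<dots> = (\<Sum>r\<in>S. omega n ^ (r*k))"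
    using Ssub by (simp add: sum.inter_filter[symmetric] Int_def) (intro sum.cong, auto)
  also have "\<dots> = (\<Sum>j\<in>{1..n}. if gcd j n \<in> D then omega n ^ (j*k) else 0)"
    unfolding S by (rule sum.inter_filter) simp
  also have "\<dots> = (\<Sum>j\<in>{1..n}. \<Sum>(a,b)\<in>Idx. if p^a*q^b \<in> D then (if cls j = a \<and> bt j = b then omega n ^ (j*k) else 0) else 0)"
    by (intro sum.cong refl gcd_in_D nD)
  also have "\<dots> = (\<Sum>(a,b)\<in>Idx. \<Sum>j\<in>{1..n}. if p^a*q^b \<in> D then (if cls j = a \<and> bt j = b then omega n ^ (j*k) else 0) else 0)"
    unfolding case_prod_unfold by (rule sum.swap)
  also have "\<dots> = (\<Sum>(a,b)\<in>Idx. if p^a*q^b \<in> D then of_int (Ld a b k) else 0)"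
  proof (intro sum.cong refl, clarify)
    fix a b assume ab: "(a,b) \<in> Idx"
    then have "a \<le> 3" "b \<le> 1" by (auto simp: Idx_def)
    then show "(\<Sum>j\<in>{1..n}. if p^a*q^b \<in> D then (if cls j = a \<and> bt j = b then omega n ^ (j*k) else 0) else 0)
        = (if p^a*q^b \<in> D then of_int (Ld a b k) else 0)"
      by (simp only: sum_if_const cls_sum)
  qed
  also have "\<dots> = (\<Sum>x\<in>Idx. of_int (case x of (a,b) \<Rightarrow> if p^a*q^b \<in> D then Ld a b k else 0))"
  proof (rule sum.cong[OF refl])
    fix x show "(case x of (a,b) \<Rightarrow> if p^a*q^b \<in> D then of_int (Ld a b k) else 0) =
       (of_int (case x of (a,b) \<Rightarrow> if p^a*q^b \<in> D then Ld a b k else 0) :: complex)"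
      by (cases x) simp
  qed
  also have "\<dots> = of_int (Lint D k)" unfolding Lint_def by (rule of_int_sum[symmetric])
  finally show ?thesis unfolding S_def .
qed

end



lemma cnt_mult: assumes "m > 0" "m dvd n" shows "card {k. k < n \<and> m dvd k} = n div m"
proof -
  have "{k. k < n \<and> m dvd k} = (\<lambda>i. m * i) ` {..<n div m}"
  proof (rule Set.set_eqI, rule iffI)
    fix k assume "k \<in> {k. k < n \<and> m dvd k}"
    then obtain i where i: "k = m * i" "k < n" by auto
    have "m * (n div m) = n" using assms(2) by simp
    then have "m * i < m * (n div m)" using i by simp
    then have "i < n div m" by simp
    then show "k \<in> (\<lambda>i. m * i) ` {..<n div m}" using i by auto
  next
    fix k assume "k \<in> (\<lambda>i. m * i) ` {..<n div m}"
    then obtain i where i: "k = m * i" "i < n div m" by auto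
    have "m * i < m * (n div m)" using i(2) assms(1) by simp
    moreover have "m * (n div m) = n" using assms(2) by simp
    ultimately show "k \<in> {k. k < n \<and> m dvd k}" using i by simp
  qed
  also have "card \<dots> = n div m" by (subst card_image) (use assms in \<open>auto simp: inj_on_def\<close>)
  finally show ?thesis .
qed

lemma superinc:
  fixes f g :: "nat \<Rightarrow> int" and w0 w1 w2 w3 :: nat
  assumes h: "\<And>r. (if f 0 = r then w0 else 0) + (if f 1 = r then w1 else 0) + (if f 2 = r then w2 else 0) + (if f 3 = r then w3 else 0)
       = (if g 0 = r then w0 else 0) + (if g 1 = r then w1 else 0) + (if g 2 = r then w2 else 0) + (if g 3 = r then w3 else 0)"
    and i0: "w0 > w1 + w2 + w3" and i1: "w1 > w2 + w3" and i2: "w2 > w3"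
  shows "f 0 = g 0 \<and> f 1 = g 1 \<and> f 2 = g 2"
proof -
  have e0: "f 0 = g 0"
  proof (rule ccontr)
    assume ne: "f 0 \<noteq> g 0"
    have "w0 \<le> (if g 0 = f 0 then w0 else 0) + (if g 1 = f 0 then w1 else 0) + (if g 2 = f 0 then w2 else 0) + (if g 3 = f 0 then w3 else 0)"
      using h[of "f 0"] by simp
    then show False using ne i0 by (simp split: if_splits)
  qed
  have e1: "f 1 = g 1"
  proof (rule ccontr)
    assume ne: "f 1 \<noteq> g 1"
    have "w1 + (if f 0 = f 1 then w0 else 0) \<le> (if g 0 = f 1 then w0 else 0) + (if g 1 = f 1 then w1 else 0) + (if g 2 = f 1 then w2 else 0) + (if g 3 = f 1 then w3 else 0)"
      using h[of "f 1"] by simp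
    then show False using ne i1 e0 by (simp split: if_splits)
  qed
  have e2: "f 2 = g 2"
  proof (rule ccontr)
    assume ne: "f 2 \<noteq> g 2"
    have "w2 + (if f 0 = f 2 then w0 else 0) + (if f 1 = f 2 then w1 else 0) \<le> (if g 0 = f 2 then w0 else 0) + (if g 1 = f 2 then w1 else 0) + (if g 2 = f 2 then w2 else 0) + (if g 3 = f 2 then w3 else 0)"
      using h[of "f 2"] by simp
    then show False using ne i2 e0 e1 by (simp split: if_splits)
  qed
  show ?thesis using e0 e1 e2 by simp
qed

context pqn begin

lemma Tv_modq: "int q dvd (Tv i t k - Tv i t (p^(cls k)))"
proof (cases "t \<ge> 1")
  case True
  then have t: "q^(1 - t) = 1" by simp
  have "p^(3-i) dvd k \<longleftrightarrow> 3 - i \<le> cls k" by (rule pow_dvd_cls) simp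
  also have "\<dots> \<longleftrightarrow> p^(3-i) dvd p^(cls k)" using dvd_power_iff_le[of p] p1 by simp
  finally have eq: "p^(3-i) dvd k \<longleftrightarrow> p^(3-i) dvd p^(cls k)" .
  show ?thesis unfolding Tv_def t using eq by simp
next
  case False
  then have "t = 0" by simp
  then have t: "q^(1 - t) = q" by simp
  show ?thesis unfolding Tv_def t by simp
qed

lemma Ld_modq: "int q dvd (Ld a b k - Ld a b (p^(cls k)))"
proof -
  have e: "Ld a b k - Ld a b (p^(cls k)) = (Tv a b k - Tv a b (p^(cls k)))
     - (if a < 3 then Tv (a+1) b k - Tv (a+1) b (p^(cls k)) else 0)
     - (if b = 0 then Tv a 1 k - Tv a 1 (p^(cls k)) else 0)
     + (if a < 3 \<and> b = 0 then Tv (a+1) 1 k - Tv (a+1) 1 (p^(cls k)) else 0)"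
    by (simp add: Ld_def)
  have h2: "int q dvd (if a < 3 then Tv (a+1) b k - Tv (a+1) b (p^(cls k)) else 0)"
    by (simp add: Tv_modq)
  have h3: "int q dvd (if b = 0 then Tv a 1 k - Tv a 1 (p^(cls k)) else 0)"
    by (simp add: Tv_modq)
  have h4: "int q dvd (if a < 3 \<and> b = 0 then Tv (a+1) 1 k - Tv (a+1) 1 (p^(cls k)) else 0)"
    by (simp add: Tv_modq)
  show ?thesis unfolding e by (rule dvd_add[OF dvd_diff[OF dvd_diff[OF Tv_modq h2] h3] h4])
qed

lemma Lint_modq: "int q dvd (Lint D k - Lint D (p^(cls k)))"
proof -
  have "Lint D k - Lint D (p^(cls k)) = (\<Sum>x\<in>Idx. (case x of (a,b) \<Rightarrow> if p^a*q^b \<in> D then Ld a b k - Ld a b (p^(cls k)) else 0))"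
    unfolding Lint_def by (subst sum_subtractf[symmetric]) (intro sum.cong refl, auto)
  also have "int q dvd \<dots>" by (intro dvd_sum) (auto simp: Ld_modq)
  finally show ?thesis .
qed

definition wt :: "nat \<Rightarrow> nat" where "wt c = card {k. k < n \<and> cls k = c}"

lemma Cp: "i \<le> 3 \<Longrightarrow> card {k. k < n \<and> p^i dvd k} = p^(3-i)*q"
proof -
  assume i: "i \<le> 3"
  have d: "p^i dvd n" using i nd by (simp add: le_imp_power_dvd)
  have "p^i * p^(3-i) = p^3" using i by (simp flip: power_add)
  then have "n = p^i * (p^(3-i)*q)" using nd by (simp only: mult.assoc[symmetric])
  then have "n div p^i = p^(3-i)*q" using p1 by simp
  then show ?thesis using cnt_mult[OF _ d] p1 by simp
qed

lemma wt_diff: assumes "c < 3" shows "wt c = card {k. k < n \<and> p^c dvd k} - card {k. k < n \<and> p^(c+1) dvd k}"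
proof -
  have "{k. k < n \<and> cls k = c} = {k. k < n \<and> p^c dvd k} - {k. k < n \<and> p^(c+1) dvd k}"
    using assms pow_dvd_cls[of c] pow_dvd_cls[of "c+1"] by auto
  moreover have "{k. k < n \<and> p^(c+1) dvd k} \<subseteq> {k. k < n \<and> p^c dvd k}"
    using pow_dvd_mono[of c "c+1"] by auto
  ultimately show ?thesis unfolding wt_def by (simp add: card_Diff_subset)
qed

lemma wt3: "wt 3 = q"
proof -
  have "\<And>k. cls k = 3 \<longleftrightarrow> p^3 dvd k" using pow_dvd_cls[of 3] cls_le by (metis le_antisym order_refl)
  then have "{k. k < n \<and> cls k = 3} = {k. k < n \<and> p^3 dvd k}" by simp
  then show ?thesis unfolding wt_def using Cp[of 3] by simp
qed

lemma wt_ineq: "wt 0 > wt 1 + wt 2 + wt 3" "wt 1 > wt 2 + wt 3" "wt 2 > wt 3"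
proof -
  have q0: "q > 0" using q1 by simp
  have c0: "card {k. k < n \<and> p^0 dvd k} = p*(p*(p*q))" using Cp[of 0] by (simp add: power3_eq_cube mult.assoc)
  have c1: "card {k. k < n \<and> p^1 dvd k} = p*(p*q)" using Cp[of 1] by (simp add: power2_eq_square mult.assoc)
  have c2: "card {k. k < n \<and> p^2 dvd k} = p*q" using Cp[of 2] by simp
  have c3: "card {k. k < n \<and> p^3 dvd k} = q" using Cp[of 3] by simp
  have l0: "(0::nat) < 3" and l1: "(1::nat) < 3" and l2: "(2::nat) < 3" by simp_all
  have e0: "(0::nat) + 1 = 1" and e1: "(1::nat) + 1 = 2" and e2: "(2::nat) + 1 = 3" by simp_all
  have "wt 0 = card {k. k < n \<and> p^0 dvd k} - card {k. k < n \<and> p^1 dvd k}"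
    using wt_diff[OF l0] by (simp only: e0)
  then have w0: "wt 0 = p*(p*(p*q)) - p*(p*q)" by (simp only: c0 c1)
  have "wt 1 = card {k. k < n \<and> p^1 dvd k} - card {k. k < n \<and> p^2 dvd k}"
    using wt_diff[OF l1] by (simp only: e1)
  then have w1: "wt 1 = p*(p*q) - p*q" by (simp only: c1 c2)
  have "wt 2 = card {k. k < n \<and> p^2 dvd k} - card {k. k < n \<and> p^3 dvd k}"
    using wt_diff[OF l2] by (simp only: e2)
  then have w2: "wt 2 = p*q - q" by (simp only: c2 c3)
  have m1: "3*q \<le> p*q" using p3 by (intro mult_le_mono1) simp
  have m2: "3*(p*q) \<le> p*(p*q)" using p3 by (intro mult_le_mono1) simp
  have m3: "3*(p*(p*q)) \<le> p*(p*(p*q))" using p3 by (intro mult_le_mono1) simp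
  show "wt 0 > wt 1 + wt 2 + wt 3" unfolding w0 w1 w2 wt3 using m1 m2 m3 q0 by linarith
  show "wt 1 > wt 2 + wt 3" unfolding w1 w2 wt3 using m1 m2 m3 q0 by linarith
  show "wt 2 > wt 3" unfolding w2 wt3 using m1 q0 by linarith
qed

lemma card_part: "card {k. k < n \<and> P (cls k)} =
   (if P 0 then wt 0 else 0) + (if P 1 then wt 1 else 0) + (if P 2 then wt 2 else 0) + (if P 3 then wt 3 else 0)"
proof -
  have fI: "finite {c::nat. c \<le> 3 \<and> P c}" by (rule finite_subset[of _ "{..3}"]) auto
  have "{k. k < n \<and> P (cls k)} = (\<Union>c\<in>{c. c \<le> 3 \<and> P c}. {k. k < n \<and> cls k = c})"
  proof (rule Set.set_eqI)
    fix k
    have "cls k \<le> 3" by (rule cls_le)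
    then show "(k \<in> {k. k < n \<and> P (cls k)}) = (k \<in> (\<Union>c\<in>{c. c \<le> 3 \<and> P c}. {k. k < n \<and> cls k = c}))"
      by blast
  qed
  also have "card \<dots> = (\<Sum>c\<in>{c. c \<le> 3 \<and> P c}. wt c)"
    unfolding wt_def by (rule card_UN_disjoint[OF fI]) auto
  also have "{c. c \<le> 3 \<and> P c} = {c\<in>{0,1,2,3}. P c}" by auto
  also have "(\<Sum>c\<in>{c\<in>{0,1,2,3}. P c}. wt c) = (\<Sum>c\<in>{0,1,2,3}. if P c then wt c else 0)"
    by (rule sum.inter_filter) simp
  also have "\<dots> = (if P 0 then wt 0 else 0) + (if P 1 then wt 1 else 0) + (if P 2 then wt 2 else 0) + (if P 3 then wt 3 else 0)"
    by (simp add: add.assoc)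
  finally show ?thesis .
qed

definition W :: "nat set \<Rightarrow> nat \<Rightarrow> int" where "W D c = Lint D (p^c) mod int q"

lemma count_res: "count (image_mset (\<lambda>x. x mod int q) (mset (map (Lint D) [0..<n]))) r =
   (if W D 0 = r then wt 0 else 0) + (if W D 1 = r then wt 1 else 0) + (if W D 2 = r then wt 2 else 0) + (if W D 3 = r then wt 3 else 0)"
proof -
  have "count (image_mset (\<lambda>x. x mod int q) (mset (map (Lint D) [0..<n]))) r
      = count (mset (map (\<lambda>k. Lint D k mod int q) [0..<n])) r"
    by (simp only: mset_map[symmetric] map_map comp_def)
  also have "\<dots> = length (filter ((=) r) (map (\<lambda>k. Lint D k mod int q) [0..<n]))"
    by (metis length_replicate replicate_count_mset_eq_filter_eq)
  also have "\<dots> = card {k. k < n \<and> r = Lint D k mod int q}"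
    by (simp add: length_filter_conv_card) (intro arg_cong[where f=card], auto)
  also have "{k. k < n \<and> r = Lint D k mod int q} = {k. k < n \<and> W D (cls k) = r}"
    using Lint_modq by (auto simp: W_def mod_eq_dvd_iff dvd_diff_commute)
  also have "card \<dots> = (if W D 0 = r then wt 0 else 0) + (if W D 1 = r then wt 1 else 0) + (if W D 2 = r then wt 2 else 0) + (if W D 3 = r then wt 3 else 0)"
    by (rule card_part)
  finally show ?thesis .
qed

definition xb :: "nat set \<Rightarrow> nat \<Rightarrow> nat \<Rightarrow> int" where
  "xb D a b = (if p^a*q^b \<in> D then 1 else 0)"

lemma Lint_xb: "Lint D k = (\<Sum>(a,b)\<in>Idx. xb D a b * Ld a b k)"
  unfolding Lint_def xb_def by (intro sum.cong refl) auto

lemma Tv_pc: "Tv i t (p^c) = (if 3 - i \<le> c \<and> 1 \<le> t then int (p^(3-i)) else 0)"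
  unfolding Tv_def using dvd_p[of "3-i" "1-t" c] by auto

lemma Lint0: "Lint D 0 = (int q - 1) * (int p^2*(int p - 1)*xb D 0 0 + int p*(int p-1)*xb D 1 0 + (int p - 1)*xb D 2 0 + xb D 3 0)
   + int p^2*(int p - 1)*xb D 0 1 + int p*(int p - 1)*xb D 1 1 + (int p - 1)*xb D 2 1"
  unfolding Lint_xb by (simp add: Idx_def Ld_def Tv_def algebra_simps power2_eq_square power3_eq_cube)

lemma LintW0: "Lint D (p^0) = xb D 2 0 - xb D 3 0 - xb D 2 1"
  unfolding Lint_xb by (simp only: Ld_def Tv_pc) (simp add: Idx_def algebra_simps)

lemma LintW1: "Lint D (p^1) = - int p * xb D 1 1 + (int p - 1) * xb D 2 1 + int p * xb D 1 0 - (int p - 1) * xb D 2 0 - xb D 3 0"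
  unfolding Lint_xb by (simp only: Ld_def Tv_pc) (simp add: Idx_def algebra_simps)

lemma LintW2: "Lint D (p^2) = - (int p^2 * xb D 0 1) + int p * (int p - 1) * xb D 1 1 + (int p - 1) * xb D 2 1
   + int p^2 * xb D 0 0 - int p * (int p - 1) * xb D 1 0 - (int p - 1) * xb D 2 0 - xb D 3 0"
  unfolding Lint_xb by (simp only: Ld_def Tv_pc) (simp add: Idx_def algebra_simps power2_eq_square)

end



lemma small_dvd: fixes x q :: int assumes "q dvd x" "\<bar>x\<bar> < q" shows "x = 0"
proof (rule ccontr)
  assume "x \<noteq> 0"
  then have "\<bar>q\<bar> \<le> \<bar>x\<bar>" using assms(1) dvd_imp_le_int by blast
  then show False using assms(2) by simp
qed

lemma prime_cancel: fixes q p x :: int assumes "prime q" "\<not> q dvd p" "q dvd p^k * x" shows "q dvd x"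
proof -
  from assms(3) have "q dvd p^k \<or> q dvd x" using prime_dvd_mult_iff[OF assms(1)] by blast
  moreover have "\<not> q dvd p^k" using assms(1,2) prime_dvd_power by blast
  ultimately show ?thesis by blast
qed

lemma final_alg:
  fixes p q a b c u v w a' b' c' u' v' w' :: int
  assumes bits: "a \<in> {0,1}" "b \<in> {0,1}" "c \<in> {0,1}" "u \<in> {0,1}" "v \<in> {0,1}" "w \<in> {0,1}"
    "a' \<in> {0,1}" "b' \<in> {0,1}" "c' \<in> {0,1}" "u' \<in> {0,1}" "v' \<in> {0,1}" "w' \<in> {0,1}"
  and p3: "p \<ge> 3" and q3: "q > 3" and qpr: "prime q" and qnp: "\<not> q dvd p"
  and h0: "q dvd ((b - c - w) - (b' - c' - w'))"
  and h1: "q dvd ((- p * v + (p - 1) * w + p * a - (p - 1) * b - c) - (- p * v' + (p - 1) * w' + p * a' - (p - 1) * b' - c'))"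
  and h2: "q dvd ((- (p^2 * u) + p * (p - 1) * v + (p - 1) * w + p^2 - p * (p - 1) * a - (p - 1) * b - c)
              - (- (p^2 * u') + p * (p - 1) * v' + (p - 1) * w' + p^2 - p * (p - 1) * a' - (p - 1) * b' - c'))"
  and hs: "(q - 1) * (p^2 * (p - 1) + p * (p - 1) * a + (p - 1) * b + c) + p^2 * (p - 1) * u + p * (p - 1) * v + (p - 1) * w
         = (q - 1) * (p^2 * (p - 1) + p * (p - 1) * a' + (p - 1) * b' + c') + p^2 * (p - 1) * u' + p * (p - 1) * v' + (p - 1) * w'"
  shows "a = a' \<and> b = b' \<and> c = c' \<and> u = u' \<and> v = v' \<and> w = w'"
proof -
  define al where "al = a - a'"
  define be where "be = b - b'"
  define ga where "ga = c - c'"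
  define x where "x = u - u'"
  define y where "y = v - v'"
  define z where "z = w - w'"
  have bd: "\<bar>al\<bar> \<le> 1" "\<bar>be\<bar> \<le> 1" "\<bar>ga\<bar> \<le> 1" "\<bar>x\<bar> \<le> 1" "\<bar>y\<bar> \<le> 1" "\<bar>z\<bar> \<le> 1"
    subgoal using bits(1,7) unfolding al_def by auto
    subgoal using bits(2,8) unfolding be_def by auto
    subgoal using bits(3,9) unfolding ga_def by auto
    subgoal using bits(4,10) unfolding x_def by auto
    subgoal using bits(5,11) unfolding y_def by auto
    subgoal using bits(6,12) unfolding z_def by auto
    done
  define dU where "dU = p * (p - 1) * al + (p - 1) * be + ga"
  define dV where "dV = p^2 * (p - 1) * x + p * (p - 1) * y + (p - 1) * z"
  have hsd: "(q - 1) * dU + dV = 0"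
  proof -
    have "(q - 1) * dU + dV = ((q - 1) * (p^2 * (p - 1) + p * (p - 1) * a + (p - 1) * b + c) + p^2 * (p - 1) * u + p * (p - 1) * v + (p - 1) * w)
         - ((q - 1) * (p^2 * (p - 1) + p * (p - 1) * a' + (p - 1) * b' + c') + p^2 * (p - 1) * u' + p * (p - 1) * v' + (p - 1) * w')"
      unfolding dU_def dV_def al_def be_def ga_def x_def y_def z_def by (simp add: algebra_simps)
    then show ?thesis using hs by simp
  qed
  have e2: "(- (p^2 * u) + p * (p - 1) * v + (p - 1) * w + p^2 - p * (p - 1) * a - (p - 1) * b - c)
              - (- (p^2 * u') + p * (p - 1) * v' + (p - 1) * w' + p^2 - p * (p - 1) * a' - (p - 1) * b' - c')
           = dV - p^3 * x - dU"
    unfolding dU_def dV_def al_def be_def ga_def x_def y_def z_def by (simp add: algebra_simps power2_eq_square power3_eq_cube)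
  also have "\<dots> = - (q * dU) - p^3 * x" using hsd by (simp add: algebra_simps)
  finally have "q dvd (- (q * dU) - p^3 * x)" using h2 by simp
  then have "q dvd (- (q * dU) - p^3 * x) + q * dU" by (rule dvd_add) simp
  then have "q dvd - (p^3 * x)" by simp
  then have "q dvd p^3 * x" by (simp only: dvd_minus_iff)
  then have "q dvd x" using prime_cancel[OF qpr qnp] by blast
  then have x0: "x = 0" using small_dvd bd(4) q3 by simp
  have "b - c - w - (b' - c' - w') = be - ga - z" unfolding be_def ga_def z_def by simp
  then have "q dvd (be - ga - z)" using h0 by simp
  moreover have "\<bar>be - ga - z\<bar> < q" using bd q3 by simp
  ultimately have bz: "be = ga + z" using small_dvd by fastforce
  have "(- p * v + (p - 1) * w + p * a - (p - 1) * b - c) - (- p * v' + (p - 1) * w' + p * a' - (p - 1) * b' - c')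
     = p^1 * (al - y - ga)"
  proof -
    have bz': "b = b' + c - c' + w - w'" using bz unfolding be_def ga_def z_def by simp
    show ?thesis unfolding al_def y_def ga_def bz' by (simp add: algebra_simps)
  qed
  then have "q dvd p^1 * (al - y - ga)" using h1 by simp
  then have "q dvd (al - y - ga)" using prime_cancel[OF qpr qnp] by blast
  moreover have "\<bar>al - y - ga\<bar> < q" using bd q3 by simp
  ultimately have ay: "al = y + ga" using small_dvd by fastforce
  have "(q - 1) * dU + dV = q * ((p - 1) * (p * y + z)) - p^2 * ga + q * (p^2 * ga)"
    unfolding dU_def dV_def using x0 ay bz by (simp add: algebra_simps power2_eq_square)
  then have h: "q * ((p - 1) * (p * y + z)) - p^2 * ga + q * (p^2 * ga) = 0" using hsd by simp
  then have "p^2 * ga = q * ((p - 1) * (p * y + z) + p^2 * ga)" by (simp add: algebra_simps)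
  then have "q dvd p^2 * ga" by (metis dvd_triv_left)
  then have "q dvd ga" using prime_cancel[OF qpr qnp] by blast
  then have g0: "ga = 0" using small_dvd bd(3) q3 by simp
  then have "q * ((p - 1) * (p * y + z)) = 0" using h by simp
  then have pyz: "p * y + z = 0" using p3 q3 by simp
  have y0: "y = 0"
  proof (rule ccontr)
    assume "y \<noteq> 0"
    then have "\<bar>y\<bar> \<ge> 1" by simp
    have "\<bar>p * y\<bar> = p * \<bar>y\<bar>" using p3 by (simp add: abs_mult)
    moreover have "3 * 1 \<le> p * \<bar>y\<bar>" using p3 \<open>\<bar>y\<bar> \<ge> 1\<close> by (intro mult_mono) auto
    ultimately have "\<bar>p * y\<bar> \<ge> 3" by simp
    then show False using pyz bd(6) by linarith
  qed
  then have z0: "z = 0" using pyz by simp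
  show ?thesis using x0 y0 z0 g0 ay bz unfolding al_def be_def ga_def x_def y_def z_def by simp
qed


context pqn begin

lemma in_Idx: assumes "D \<subseteq> divisors_of n - {n}" "d \<in> D" shows "\<exists>a b. (a,b) \<in> Idx \<and> d = p^a*q^b"
proof -
  have "d dvd n" "d \<noteq> n" using assms by (auto simp: divisors_of_def)
  then obtain a b where ab: "a \<le> 3" "b \<le> 1" "d = p^a*q^b" using div_form by blast
  have "\<not> (a = 3 \<and> b = 1)" using ab \<open>d \<noteq> n\<close> nd by auto
  then have "(a,b) \<in> Idx" using ab(1,2) unfolding Idx_def
    by (cases a; cases b; auto simp: numeral_3_eq_3 numeral_2_eq_2 le_Suc_eq)
  then show ?thesis using ab by blast
qed

lemma Spec_D: assumes "D \<subseteq> divisors_of n - {n}"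
  shows "Spec (ICG_adj n D) = image_mset of_int (mset (map (Lint D) [0..<n]))"
proof -
  have "Spec (ICG_adj n D) = mset (map (mu n (conn_set n D)) [0..<n])"
    unfolding ICG_adj_def by (rule Spec_cay[OF npos])
  also have "map (mu n (conn_set n D)) [0..<n] = map (\<lambda>k. of_int (Lint D k)) [0..<n]"
    using mu_conn[OF assms] by simp
  also have "mset (map (\<lambda>k. of_int (Lint D k)) [0..<n]) = image_mset of_int (mset (map (Lint D) [0..<n]))"
    by (simp only: mset_map[symmetric] map_map comp_def)
  finally show ?thesis .
qed

lemma Lint_le: assumes "D \<subseteq> divisors_of n - {n}" shows "Lint D k \<le> Lint D 0"
  using Re_mu_le[of n "conn_set n D" k] mu_conn[OF assms] by simp

lemma main:
  assumes D1: "D1 \<subseteq> divisors_of n - {n}" and D2: "D2 \<subseteq> divisors_of n - {n}"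
    and o1: "1 \<in> D1" and o2: "1 \<in> D2"
    and sp: "Spec (ICG_adj n D1) = Spec (ICG_adj n D2)"
  shows "D1 = D2"
proof -
  define M1 where "M1 = mset (map (Lint D1) [0..<n])"
  define M2 where "M2 = mset (map (Lint D2) [0..<n])"
  have "image_mset (of_int :: int \<Rightarrow> complex) M1 = image_mset of_int M2"
    using sp unfolding M1_def M2_def Spec_D[OF D1] Spec_D[OF D2] .
  then have M: "M1 = M2" by (rule multiset.inj_map_strong[rotated]) simp
  have S: "Lint D1 0 = Lint D2 0"
  proof -
    have "Lint D1 0 \<in># M1" unfolding M1_def using npos by simp
    then have "Lint D1 0 \<in># M2" using M by simp
    then obtain k where "Lint D1 0 = Lint D2 k" unfolding M2_def by auto
    then have i1: "Lint D1 0 \<le> Lint D2 0" using Lint_le[OF D2] by simp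
    have "Lint D2 0 \<in># M2" unfolding M2_def using npos by simp
    then have "Lint D2 0 \<in># M1" using M by simp
    then obtain k where "Lint D2 0 = Lint D1 k" unfolding M1_def by auto
    then have "Lint D2 0 \<le> Lint D1 0" using Lint_le[OF D1] by simp
    with i1 show ?thesis by simp
  qed
  have "\<And>r. count (image_mset (\<lambda>x. x mod int q) M1) r = count (image_mset (\<lambda>x. x mod int q) M2) r"
    using M by simp
  then have cr: "\<And>r. (if W D1 0 = r then wt 0 else 0) + (if W D1 1 = r then wt 1 else 0) + (if W D1 2 = r then wt 2 else 0) + (if W D1 3 = r then wt 3 else 0)
     = (if W D2 0 = r then wt 0 else 0) + (if W D2 1 = r then wt 1 else 0) + (if W D2 2 = r then wt 2 else 0) + (if W D2 3 = r then wt 3 else 0)"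
    unfolding M1_def M2_def count_res by simp
  have Weq: "W D1 0 = W D2 0 \<and> W D1 1 = W D2 1 \<and> W D1 2 = W D2 2"
    by (rule superinc[OF cr wt_ineq])
  have dv: "int q dvd (Lint D1 (p^c) - Lint D2 (p^c))" if "W D1 c = W D2 c" for c
    using that unfolding W_def by (simp add: mod_eq_dvd_iff)
  have dv0: "int q dvd (Lint D1 (p^0) - Lint D2 (p^0))" using dv Weq by blast
  have dv1: "int q dvd (Lint D1 (p^1) - Lint D2 (p^1))" using dv Weq by blast
  have dv2: "int q dvd (Lint D1 (p^2) - Lint D2 (p^2))" using dv Weq by blast
  have x1: "xb D1 0 0 = 1" "xb D2 0 0 = 1" using o1 o2 by (simp_all add: xb_def)
  have bits: "\<And>D a b. xb D a b \<in> {0,1}" by (simp add: xb_def)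
  have qpr: "prime (int q)" using qp by (simp add: prime_nat_int_transfer)
  have qnp: "\<not> int q dvd int p"
  proof
    assume "int q dvd int p"
    then have "q dvd p" by simp
    then have "q \<le> p" using p1 by (simp add: dvd_imp_le)
    then show False using plq by simp
  qed
  have p3': "int p \<ge> 3" using p3 by simp
  have q3': "int q > 3" using p3 plq by simp
  have h0: "int q dvd ((xb D1 2 0 - xb D1 3 0 - xb D1 2 1) - (xb D2 2 0 - xb D2 3 0 - xb D2 2 1))"
    using dv0 unfolding LintW0 .
  have h1: "int q dvd ((- int p * xb D1 1 1 + (int p - 1) * xb D1 2 1 + int p * xb D1 1 0 - (int p - 1) * xb D1 2 0 - xb D1 3 0)
     - (- int p * xb D2 1 1 + (int p - 1) * xb D2 2 1 + int p * xb D2 1 0 - (int p - 1) * xb D2 2 0 - xb D2 3 0))"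
    using dv1 unfolding LintW1 .
  have h2: "int q dvd ((- (int p^2 * xb D1 0 1) + int p * (int p - 1) * xb D1 1 1 + (int p - 1) * xb D1 2 1 + int p^2
       - int p * (int p - 1) * xb D1 1 0 - (int p - 1) * xb D1 2 0 - xb D1 3 0)
     - (- (int p^2 * xb D2 0 1) + int p * (int p - 1) * xb D2 1 1 + (int p - 1) * xb D2 2 1 + int p^2
       - int p * (int p - 1) * xb D2 1 0 - (int p - 1) * xb D2 2 0 - xb D2 3 0))"
    using dv2 unfolding LintW2 x1 by simp
  have hs: "(int q - 1) * (int p^2 * (int p - 1) + int p * (int p - 1) * xb D1 1 0 + (int p - 1) * xb D1 2 0 + xb D1 3 0)
       + int p^2 * (int p - 1) * xb D1 0 1 + int p * (int p - 1) * xb D1 1 1 + (int p - 1) * xb D1 2 1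
     = (int q - 1) * (int p^2 * (int p - 1) + int p * (int p - 1) * xb D2 1 0 + (int p - 1) * xb D2 2 0 + xb D2 3 0)
       + int p^2 * (int p - 1) * xb D2 0 1 + int p * (int p - 1) * xb D2 1 1 + (int p - 1) * xb D2 2 1"
    using S unfolding Lint0 x1 by simp
  have fa: "xb D1 1 0 = xb D2 1 0 \<and> xb D1 2 0 = xb D2 2 0 \<and> xb D1 3 0 = xb D2 3 0 \<and>
            xb D1 0 1 = xb D2 0 1 \<and> xb D1 1 1 = xb D2 1 1 \<and> xb D1 2 1 = xb D2 2 1"
    by (rule final_alg[OF bits bits bits bits bits bits bits bits bits bits bits bits p3' q3' qpr qnp h0 h1 h2 hs])
  have xeq: "xb D1 a b = xb D2 a b" if "(a,b) \<in> Idx" for a b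
    using that fa x1 unfolding Idx_def by auto
  have mem: "p^a*q^b \<in> D1 \<longleftrightarrow> p^a*q^b \<in> D2" if "(a,b) \<in> Idx" for a b
    using xeq[OF that] unfolding xb_def by (auto split: if_splits)
  show ?thesis
  proof (rule Set.set_eqI)
    fix d show "d \<in> D1 \<longleftrightarrow> d \<in> D2"
    proof
      assume "d \<in> D1"
      then obtain a b where "(a,b) \<in> Idx" "d = p^a*q^b" using in_Idx[OF D1] by blast
      then show "d \<in> D2" using mem \<open>d \<in> D1\<close> by blast
    next
      assume "d \<in> D2"
      then obtain a b where "(a,b) \<in> Idx" "d = p^a*q^b" using in_Idx[OF D2] by blast
      then show "d \<in> D1" using mem \<open>d \<in> D2\<close> by blast
    qed
  qed
qed

end

theorem lemma3p21:
  fixes p q n :: nat and D1 D2 :: "nat set"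
  assumes "prime p" and "prime q" and "3 \<le> p" and "p < q"
    and "n = p ^ 3 * q"
    and "D1 \<subseteq> divisors_of n - {n}" and "D2 \<subseteq> divisors_of n - {n}"
    and "1 \<in> D1" and "1 \<in> D2"
    and "Spec (ICG_adj n D1) = Spec (ICG_adj n D2)"
  shows "D1 = D2"
proof -
  interpret pqn p q n by unfold_locales (use assms in auto)
  show ?thesis by (rule main) (use assms in auto)
qed


end
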